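(* Let $(X,d)$ and $(\Lambda,\rho)$ be compact metric spaces and $\omega:\Lambda\times X\to X$ continuous. Let $\mu_1,\mu_2$ be Borel probability measures on $\Omega\times X$ invariant under the skew product $\Phi$, and let $\nu$ be a Borel probability measure on $\Omega$ with $\nu(F)=1$ and $\pi_*(\mu_1)=\pi_*(\mu_2)=\nu$. Then $\mu_1=\mu_2$.
   Context: $\omega_\lambda(x)=\omega(\lambda,x)$. $\Omega=\Lambda^{\mathbb{N}}$ with the product topology; $\beta:\Omega\to\Omega$ is the shift $\beta(\sigma_1,\sigma_2,\dots)=(\sigma_2,\sigma_3,\dots)$. The skew product is $\Phi:\Omega\times X\to\Omega\times X$, $\Phi(\sigma,x)=(\beta(\sigma),\omega_{\sigma_1}(x))$, and $\pi:\Omega\times X\to\Omega$ is $\pi(\sigma,x)=\sigma$. $F=\{\sigma\in\Omega:\lim_{n\to\infty}\frac1n\sum_{i=1}^n\operatorname{Diam}(\omega_{\sigma_i}\circ\cdots\circ\omega_{\sigma_1}(X))=0\}$, with $\operatorname{Diam}(A)=\sup\{d(x,y):x,y\in A\}$. *)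

theory Defs
  imports "HOL-Probability.Probability"
begin

text \<open>Sequences sigma = (sigma_1, sigma_2, ...) in Omega = Lambda^N are represented as
  functions nat => Lambda, with sigma_{i+1} = sigma i (0-based indexing).\<close>

definition shift :: "(nat \<Rightarrow> 'l) \<Rightarrow> (nat \<Rightarrow> 'l)" where
  "shift \<sigma> = (\<lambda>n. \<sigma> (Suc n))"

definition skew :: "('l \<Rightarrow> 'x \<Rightarrow> 'x) \<Rightarrow> (nat \<Rightarrow> 'l) \<times> 'x \<Rightarrow> (nat \<Rightarrow> 'l) \<times> 'x" where
  "skew \<omega> p = (shift (fst p), \<omega> (fst p 0) (snd p))"

primrec iter_comp :: "('l \<Rightarrow> 'x \<Rightarrow> 'x) \<Rightarrow> (nat \<Rightarrow> 'l) \<Rightarrow> nat \<Rightarrow> 'x \<Rightarrow> 'x" where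
  "iter_comp \<omega> \<sigma> 0 = id"
| "iter_comp \<omega> \<sigma> (Suc n) = \<omega> (\<sigma> n) \<circ> iter_comp \<omega> \<sigma> n"

definition Fset :: "('l \<Rightarrow> 'x::metric_space \<Rightarrow> 'x) \<Rightarrow> (nat \<Rightarrow> 'l) set" where
  "Fset \<omega> = {\<sigma>. (\<lambda>n. (\<Sum>i=1..n. diameter (range (iter_comp \<omega> \<sigma> i))) / real n)
                     \<longlonglongrightarrow> 0}"

end

theory Submission
  imports Defs
begin

lemma skew_pow:
  "(skew \<omega> ^^ n) (\<sigma>, x) = ((\<lambda>m. \<sigma> (m + n)), iter_comp \<omega> \<sigma> n x)"
  by (induction n) (auto simp: skew_def shift_def)

lemma skew_cont:
  fixes \<omega> :: "'l::metric_space \<Rightarrow> 'x::metric_space \<Rightarrow> 'x"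
  assumes "continuous_on UNIV (\<lambda>(l, x). \<omega> l x)"
  shows "continuous_on UNIV (skew \<omega>)"
proof -
  have s: "continuous_on UNIV (shift :: (nat \<Rightarrow> 'l) \<Rightarrow> _)"
    unfolding shift_def by (intro continuous_on_coordinatewise_then_product) simp
  have a: "continuous_on UNIV (\<lambda>p::(nat\<Rightarrow>'l)\<times>'x. (fst p 0, snd p))"
    by (intro continuous_intros continuous_on_compose2[OF continuous_on_product_coordinates[of 0]]) auto
  have b: "continuous_on UNIV (\<lambda>p::(nat\<Rightarrow>'l)\<times>'x. \<omega> (fst p 0) (snd p))"
    using continuous_on_compose2[OF assms a] by simp
  show ?thesis unfolding skew_def
    by (intro continuous_intros continuous_on_compose2[OF s] b) auto
qed

lemma skew_pow_cont:
  fixes \<omega> :: "'l::metric_space \<Rightarrow> 'x::metric_space \<Rightarrow> 'x"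
  assumes "continuous_on UNIV (\<lambda>(l, x). \<omega> l x)"
  shows "continuous_on UNIV (skew \<omega> ^^ n)"
proof (induction n)
  case 0 then show ?case by (simp add: continuous_on_id)
next
  case (Suc n)
  show ?case using continuous_on_compose2[OF skew_cont[OF assms] Suc] by (simp add: comp_def)
qed


lemma skew_inv:
  fixes \<omega> :: "'l::metric_space \<Rightarrow> 'x::metric_space \<Rightarrow> 'x" and \<mu> :: "((nat \<Rightarrow> 'l) \<times> 'x) measure"
  assumes c: "continuous_on UNIV (\<lambda>(l, x). \<omega> l x)"
    and s: "sets \<mu> = sets borel"
    and inv: "\<forall>A \<in> sets borel. emeasure \<mu> (skew \<omega> -` A) = emeasure \<mu> A"
  shows "distr \<mu> borel (skew \<omega> ^^ n) = \<mu>"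
proof (induction n)
  case 0 then show ?case
    by (simp add: s distr_id2 sets_eq_imp_space_eq)
next
  case (Suc n)
  have sp: "space \<mu> = UNIV" using sets_eq_imp_space_eq[OF s] by simp
  have m: "skew \<omega> \<in> measurable \<mu> borel"
    using measurable_cong_sets[OF s refl] borel_measurable_continuous_onI[OF skew_cont[OF c]] by blast
  have m2: "skew \<omega> \<in> measurable borel borel"
    using borel_measurable_continuous_onI[OF skew_cont[OF c]] by blast
  have mn: "(skew \<omega> ^^ n) \<in> measurable \<mu> borel"
    using measurable_cong_sets[OF s refl] borel_measurable_continuous_onI[OF skew_pow_cont[OF c]] by blast
  have d1: "distr \<mu> borel (skew \<omega>) = \<mu>"
  proof (rule measure_eqI)
    show "sets (distr \<mu> borel (skew \<omega>)) = sets \<mu>" using s by simp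
    fix A assume "A \<in> sets (distr \<mu> borel (skew \<omega>))"
    then have A: "A \<in> sets borel" by simp
    show "emeasure (distr \<mu> borel (skew \<omega>)) A = emeasure \<mu> A"
      using inv A by (simp add: emeasure_distr[OF m A] sp)
  qed
  have "distr \<mu> borel (skew \<omega> ^^ Suc n) = distr (distr \<mu> borel (skew \<omega> ^^ n)) borel (skew \<omega>)"
    by (simp add: distr_distr[OF m2 mn] comp_def)
  also have "\<dots> = \<mu>" using Suc d1 by simp
  finally show ?case .
qed


lemma meas_cont: assumes "sets M = sets borel" "continuous_on UNIV f" shows "f \<in> borel_measurable M"
  unfolding measurable_cong_sets[OF assms(1) refl] by (rule borel_measurable_continuous_onI[OF assms(2)])

lemma core:
  fixes \<omega> :: "'l::metric_space \<Rightarrow> 'x::metric_space \<Rightarrow> 'x" and \<mu> :: "((nat \<Rightarrow> 'l) \<times> 'x) measure"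
    and \<nu> :: "(nat \<Rightarrow> 'l) measure" and g :: "(nat \<Rightarrow> 'l) \<times> 'x \<Rightarrow> real"
  assumes cX: "compact (UNIV :: 'x set)"
    and c: "continuous_on UNIV (\<lambda>(l, x). \<omega> l x)"
    and s: "sets \<mu> = sets borel" and P: "prob_space \<mu>"
    and inv: "\<forall>A \<in> sets borel. emeasure \<mu> (skew \<omega> -` A) = emeasure \<mu> A"
    and sn: "sets \<nu> = sets borel" and Pn: "prob_space \<nu>"
    and F1: "emeasure \<nu> (Fset \<omega>) = 1"
    and dn: "distr \<mu> borel fst = \<nu>"
    and L: "L \<ge> 0" and lip: "\<And>p q. \<bar>g p - g q\<bar> \<le> L * dist p q"
    and bd: "\<And>p. \<bar>g p\<bar> \<le> B"
  shows "(\<lambda>N. (\<Sum>n=1..N. \<integral>\<sigma>. g ((skew \<omega> ^^ n) (\<sigma>, x0)) \<partial>\<nu>) / real N) \<longlonglongrightarrow> integral\<^sup>L \<mu> g"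
proof -
  interpret prob_space \<mu> by (rule P)
  define T where "T = skew \<omega>"
  define h where "h n \<sigma> = g ((T ^^ n) (\<sigma>, x0))" for n \<sigma>
  define cc where "cc N = (\<Sum>n=1..N. \<integral>\<sigma>. h n \<sigma> \<partial>\<nu>) / real N" for N
  define d where "d n p = dist (snd ((T ^^ n) p)) (snd ((T ^^ n) (fst p, x0)))" for n p
  define e where "e N p = (\<Sum>n=1..N. d n p) / real N" for N p
  have sp: "space \<mu> = UNIV" using sets_eq_imp_space_eq[OF s] by simp
  have spn: "space \<nu> = UNIV" using sets_eq_imp_space_eq[OF sn] by simp
  note meas = meas_cont[OF s]
  have gc: "continuous_on UNIV g"
  proof (cases "L = 0")
    case True
    then have "g p = g q" for p q using lip[of p q] by simp
    then show ?thesis by (metis continuous_on_const ext)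
  next
    case False
    show ?thesis unfolding continuous_on_iff
    proof (intro ballI allI impI)
      fix x and eps :: real assume "eps > 0"
      then show "\<exists>dd>0. \<forall>x'\<in>UNIV. dist x' x < dd \<longrightarrow> dist (g x') (g x) < eps"
      proof (intro exI[of _ "eps / L"] conjI ballI impI)
        show "eps / L > 0" using False L \<open>eps > 0\<close> by simp
        fix x' assume "dist x' x < eps / L"
        then have "L * dist x' x < eps" using False L by (simp add: field_simps)
        then show "dist (g x') (g x) < eps" using lip[of x' x] by (simp add: dist_real_def)
      qed
    qed
  qed
  have Tc: "continuous_on UNIV (T ^^ n)" for n unfolding T_def by (rule skew_pow_cont[OF c])
  have gTc: "continuous_on UNIV (\<lambda>p. g ((T ^^ n) p))" for n
    using continuous_on_compose2[OF gc Tc] by simp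
  have hc: "continuous_on UNIV (h n)" for n
    unfolding h_def using continuous_on_compose2[OF gTc[of n], of UNIV "\<lambda>\<sigma>. (\<sigma>, x0)"]
    using continuous_on_Pair[OF continuous_on_id continuous_on_const] by blast
  have hfc: "continuous_on UNIV (\<lambda>p. h n (fst p))" for n
    using continuous_on_compose2[OF hc continuous_on_fst[OF continuous_on_id] subset_UNIV] by blast
  have dc: "continuous_on UNIV (d n)" for n
  proof -
    have 1: "continuous_on UNIV (\<lambda>p. snd ((T ^^ n) p))"
      using continuous_on_snd[OF Tc] .
    have 2: "continuous_on UNIV (\<lambda>p::(nat\<Rightarrow>'l)\<times>'x. (fst p, x0))" by (intro continuous_intros)
    have 3: "continuous_on UNIV (\<lambda>p::(nat\<Rightarrow>'l)\<times>'x. snd ((T ^^ n) (fst p, x0)))"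
      using continuous_on_compose2[OF 1 2 subset_UNIV] by blast
    show ?thesis unfolding d_def by (intro continuous_intros 1 3)
  qed
  have fstm: "fst \<in> measurable \<mu> borel" using meas[OF continuous_on_fst[OF continuous_on_id[of UNIV]]] by simp
  have hm: "h n \<in> borel_measurable borel" for n using borel_measurable_continuous_onI[OF hc] .
  have gm: "g \<in> borel_measurable borel" using borel_measurable_continuous_onI[OF gc] .
  have Tm: "(T ^^ n) \<in> measurable \<mu> borel" for n using meas[OF Tc] .
  have int_bd: "integrable \<mu> f" if "continuous_on UNIV f" "\<And>p. norm (f p) \<le> K" for f :: "_ \<Rightarrow> real" and K
    by (intro integrable_const_bound[where B=K] AE_I2 meas that)
  have gint: "integrable \<mu> (\<lambda>p. g ((T ^^ n) p))" for n by (rule int_bd[of _ B, OF gTc]) (simp add: bd)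
  have hint: "integrable \<mu> (\<lambda>p. h n (fst p))" for n by (rule int_bd[of _ B, OF hfc]) (simp add: bd h_def)
  have S2: "integral\<^sup>L \<mu> g = (\<integral>p. g ((T ^^ n) p) \<partial>\<mu>)" for n
  proof -
    have "integral\<^sup>L \<mu> g = integral\<^sup>L (distr \<mu> borel (T ^^ n)) g"
      using skew_inv[OF c s inv, of n] by (simp add: T_def)
    also have "\<dots> = (\<integral>p. g ((T ^^ n) p) \<partial>\<mu>)" by (rule integral_distr[OF Tm gm])
    finally show ?thesis .
  qed
  have S3: "(\<integral>\<sigma>. h n \<sigma> \<partial>\<nu>) = (\<integral>p. h n (fst p) \<partial>\<mu>)" for n
    using integral_distr[OF fstm hm] dn by simp
  have dist_eq: "dist ((T ^^ n) p) ((T ^^ n) (fst p, x0)) = d n p" for n p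
    by (cases p) (simp add: d_def T_def skew_pow dist_Pair_Pair)
  have S4: "integral\<^sup>L \<mu> g - cc N = (\<integral>p. (\<Sum>n=1..N. g ((T ^^ n) p) - h n (fst p)) / real N \<partial>\<mu>)"
    if "N \<ge> 1" for N
  proof -
    have "(\<integral>p. (\<Sum>n=1..N. g ((T ^^ n) p) - h n (fst p)) / real N \<partial>\<mu>)
        = (\<Sum>n=1..N. (\<integral>p. g ((T ^^ n) p) \<partial>\<mu>) - (\<integral>p. h n (fst p) \<partial>\<mu>)) / real N"
      using gint hint by (simp add: integral_sum)
    also have "\<dots> = (\<Sum>n=1..N. integral\<^sup>L \<mu> g - (\<integral>\<sigma>. h n \<sigma> \<partial>\<nu>)) / real N"
      using S2 S3 by simp
    also have "\<dots> = integral\<^sup>L \<mu> g - cc N"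
      using that by (simp add: sum_subtractf cc_def field_simps)
    finally show ?thesis by simp
  qed
  obtain D where D: "\<And>x y :: 'x. dist x y \<le> D"
    using diameter_bounded_bound[OF compact_imp_bounded[OF cX]] by blast
  have dD: "d n p \<le> D" for n p unfolding d_def by (rule D)
  have dpos: "d n p \<ge> 0" for n p unfolding d_def by simp
  have eint: "integrable \<mu> (e N)" for N
  proof (rule int_bd)
    show "continuous_on UNIV (e N)" unfolding e_def divide_inverse by (intro continuous_intros dc)
    show "norm (e N p) \<le> D" for p
    proof (cases "N = 0")
      case False
      have "(\<Sum>n=1..N. d n p) \<le> (\<Sum>n=1..N. D)" by (rule sum_mono[OF dD])
      then have "(\<Sum>n=1..N. d n p) \<le> real N * D" by simp
      then have "e N p \<le> real N * D / real N" unfolding e_def by (rule divide_right_mono) simp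
      moreover have "e N p \<ge> 0" unfolding e_def using dpos by (intro divide_nonneg_nonneg sum_nonneg) auto
      ultimately show ?thesis using False by simp
    qed (use D[of x0 x0] in \<open>simp add: e_def\<close>)
  qed
  have S5: "\<bar>integral\<^sup>L \<mu> g - cc N\<bar> \<le> L * integral\<^sup>L \<mu> (e N)" if "N \<ge> 1" for N
  proof -
    have "\<bar>integral\<^sup>L \<mu> g - cc N\<bar> \<le> (\<integral>p. \<bar>(\<Sum>n=1..N. g ((T ^^ n) p) - h n (fst p)) / real N\<bar> \<partial>\<mu>)"
      unfolding S4[OF that] using integral_norm_bound[of \<mu> "\<lambda>p. (\<Sum>n=1..N. g ((T ^^ n) p) - h n (fst p)) / real N"]
      by (simp only: real_norm_def)
    also have "\<dots> \<le> (\<integral>p. L * e N p \<partial>\<mu>)"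
    proof (rule integral_mono)
      show "integrable \<mu> (\<lambda>p. \<bar>(\<Sum>n=1..N. g ((T ^^ n) p) - h n (fst p)) / real N\<bar>)"
        using gint hint by simp
      show "integrable \<mu> (\<lambda>p. L * e N p)" by (intro integrable_mult_right eint)
      fix p
      have "\<bar>\<Sum>n=1..N. g ((T ^^ n) p) - h n (fst p)\<bar> \<le> (\<Sum>n=1..N. \<bar>g ((T ^^ n) p) - h n (fst p)\<bar>)"
        by (rule sum_abs)
      also have "\<dots> \<le> (\<Sum>n=1..N. L * d n p)"
      proof (rule sum_mono)
        fix n show "\<bar>g ((T ^^ n) p) - h n (fst p)\<bar> \<le> L * d n p"
          unfolding h_def using lip[of "(T^^n) p" "(T^^n) (fst p, x0)"] dist_eq[of n p] by simp
      qed
      finally have *: "\<bar>\<Sum>n=1..N. g ((T ^^ n) p) - h n (fst p)\<bar> \<le> (\<Sum>n=1..N. L * d n p)" .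
      have "\<bar>(\<Sum>n=1..N. g ((T ^^ n) p) - h n (fst p)) / real N\<bar> = \<bar>\<Sum>n=1..N. g ((T ^^ n) p) - h n (fst p)\<bar> / real N"
        by (simp add: abs_divide)
      also have "\<dots> \<le> (\<Sum>n=1..N. L * d n p) / real N" using * by (rule divide_right_mono) simp
      also have "\<dots> = L * e N p" by (simp add: e_def sum_distrib_left[symmetric])
      finally show "\<bar>(\<Sum>n=1..N. g ((T ^^ n) p) - h n (fst p)) / real N\<bar> \<le> L * e N p" .
    qed
    also have "\<dots> = L * integral\<^sup>L \<mu> (e N)" by simp
    finally show ?thesis .
  qed
  have AEF: "AE p in \<mu>. fst p \<in> Fset \<omega>"
  proof -
    have Fm: "Fset \<omega> \<in> sets \<nu>" using F1 emeasure_notin_sets by fastforce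
    have "AE \<sigma> in \<nu>. \<sigma> \<in> Fset \<omega>"
      using prob_space.AE_prob_1[OF Pn] F1 by (simp add: measure_def)
    then have "AE \<sigma> in distr \<mu> borel fst. \<sigma> \<in> Fset \<omega>" unfolding dn .
    then show ?thesis
      using AE_distr_iff[OF fstm, of "\<lambda>\<sigma>. \<sigma> \<in> Fset \<omega>"] Fm sn by simp
  qed
  have S6: "(\<lambda>N. integral\<^sup>L \<mu> (e N)) \<longlonglongrightarrow> integral\<^sup>L \<mu> (\<lambda>_. 0)"
  proof (rule integral_dominated_convergence[where w = "\<lambda>_. D"])
    show "(\<lambda>_. 0::real) \<in> borel_measurable \<mu>" by simp
    show "e N \<in> borel_measurable \<mu>" for N using eint by (rule borel_measurable_integrable)
    show "integrable \<mu> (\<lambda>_. D)" by simp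
    show "AE p in \<mu>. norm (e N p) \<le> D" for N
    proof (rule AE_I2)
      fix p show "norm (e N p) \<le> D"
      proof (cases "N = 0")
        case False
        have "(\<Sum>n=1..N. d n p) \<le> (\<Sum>n=1..N. D)" by (rule sum_mono[OF dD])
        then have "(\<Sum>n=1..N. d n p) \<le> real N * D" by simp
        then have "e N p \<le> real N * D / real N" unfolding e_def by (rule divide_right_mono) simp
      moreover have "e N p \<ge> 0" unfolding e_def using dpos by (intro divide_nonneg_nonneg sum_nonneg) auto
      ultimately show ?thesis using False by simp
      qed (use D[of x0 x0] in \<open>simp add: e_def\<close>)
    qed
    show "AE p in \<mu>. (\<lambda>N. e N p) \<longlonglongrightarrow> 0"
      using AEF
    proof (rule eventually_mono)
      fix p :: "(nat \<Rightarrow> 'l) \<times> 'x" assume pF: "fst p \<in> Fset \<omega>"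
      obtain \<sigma> x where p: "p = (\<sigma>, x)" by (cases p)
      have lim: "(\<lambda>n. (\<Sum>i=1..n. diameter (range (iter_comp \<omega> \<sigma> i))) / real n) \<longlonglongrightarrow> 0"
        using pF p by (simp add: Fset_def)
      have le: "d n p \<le> diameter (range (iter_comp \<omega> \<sigma> n))" for n
        unfolding d_def p T_def skew_pow
        by (simp add: diameter_bounded_bound bounded_subset[OF compact_imp_bounded[OF cX]])
      show "(\<lambda>N. e N p) \<longlonglongrightarrow> 0"
      proof (rule tendsto_sandwich[OF _ _ tendsto_const lim])
        show "\<forall>\<^sub>F N in sequentially. 0 \<le> e N p"
          unfolding e_def by (intro always_eventually allI divide_nonneg_nonneg sum_nonneg dpos) simp
        show "\<forall>\<^sub>F N in sequentially. e N p \<le> (\<Sum>i=1..N. diameter (range (iter_comp \<omega> \<sigma> i))) / real N"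
          unfolding e_def by (intro always_eventually allI divide_right_mono sum_mono le) simp
      qed
    qed
  qed
  have S7: "(\<lambda>N. integral\<^sup>L \<mu> g - cc N) \<longlonglongrightarrow> 0"
  proof (rule Lim_null_comparison)
    show "\<forall>\<^sub>F N in sequentially. norm (integral\<^sup>L \<mu> g - cc N) \<le> L * integral\<^sup>L \<mu> (e N)"
      using eventually_ge_at_top[of 1] by (rule eventually_mono) (simp add: S5)
    show "(\<lambda>N. L * integral\<^sup>L \<mu> (e N)) \<longlonglongrightarrow> 0"
      using tendsto_mult[OF tendsto_const[of L] S6] by simp
  qed
  have "(\<lambda>N. integral\<^sup>L \<mu> g - (integral\<^sup>L \<mu> g - cc N)) \<longlonglongrightarrow> integral\<^sup>L \<mu> g - 0"
    by (intro tendsto_diff tendsto_const S7)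
  then show ?thesis by (simp add: cc_def h_def T_def)
qed


lemma lip_gk:
  fixes C :: "'a::metric_space set"
  shows "\<bar>max 0 (1 - real k * infdist p C) - max 0 (1 - real k * infdist q C)\<bar> \<le> real k * dist p q"
proof -
  have a: "\<bar>infdist p C - infdist q C\<bar> \<le> dist p q" by (rule infdist_triangle_abs)
  have mx: "\<And>u v::real. \<bar>max 0 u - max 0 v\<bar> \<le> \<bar>u - v\<bar>" by (auto simp: max_def abs_if)
  have "\<bar>max 0 (1 - real k * infdist p C) - max 0 (1 - real k * infdist q C)\<bar>
      \<le> \<bar>(1 - real k * infdist p C) - (1 - real k * infdist q C)\<bar>" by (rule mx)
  also have "\<dots> = real k * \<bar>infdist p C - infdist q C\<bar>" by (simp add: abs_mult right_diff_distrib[symmetric] abs_minus_commute)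
  also have "\<dots> \<le> real k * dist p q" using a by (simp add: mult_left_mono)
  finally show ?thesis .
qed

lemma gk_lim:
  fixes C :: "'a::metric_space set"
  assumes "closed C" "C \<noteq> {}"
  shows "(\<lambda>k. max 0 (1 - real k * infdist p C)) \<longlonglongrightarrow> indicator C p"
proof (cases "p \<in> C")
  case True
  then have "infdist p C = 0" using in_closed_iff_infdist_zero[OF assms] by simp
  then show ?thesis using True by simp
next
  case False
  then have pos: "infdist p C > 0" using in_closed_iff_infdist_zero[OF assms, of p] infdist_nonneg[of p C] by linarith
  obtain m :: nat where m: "1 / infdist p C \<le> real m" using real_arch_simple by blast
  have "\<forall>\<^sub>F k in sequentially. max 0 (1 - real k * infdist p C) = indicator C p"
    using eventually_ge_at_top[of m]
  proof (rule eventually_mono)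
    fix k assume "m \<le> k"
    then have "1 / infdist p C \<le> real k" using m by linarith
    then have "1 \<le> real k * infdist p C" using pos by (simp add: field_simps)
    then show "max 0 (1 - real k * infdist p C) = indicator C p" using False by simp
  qed
  then show ?thesis by (rule tendsto_eventually)
qed


theorem proposition1:
  fixes \<omega> :: "'l::metric_space \<Rightarrow> 'x::metric_space \<Rightarrow> 'x"
    and \<mu>1 \<mu>2 :: "((nat \<Rightarrow> 'l) \<times> 'x) measure"
    and \<nu> :: "(nat \<Rightarrow> 'l) measure"
  assumes "compact (UNIV :: 'x set)" and "compact (UNIV :: 'l set)"
    and "continuous_on UNIV (\<lambda>(l, x). \<omega> l x)"
    and "sets \<mu>1 = sets borel" and "prob_space \<mu>1"
    and "sets \<mu>2 = sets borel" and "prob_space \<mu>2"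
    and "\<forall>A \<in> sets borel. emeasure \<mu>1 (skew \<omega> -` A) = emeasure \<mu>1 A"
    and "\<forall>A \<in> sets borel. emeasure \<mu>2 (skew \<omega> -` A) = emeasure \<mu>2 A"
    and "sets \<nu> = sets borel" and "prob_space \<nu>"
    and "emeasure \<nu> (Fset \<omega>) = 1"
    and "distr \<mu>1 borel fst = \<nu>" and "distr \<mu>2 borel fst = \<nu>"
  shows "\<mu>1 = \<mu>2"
proof -
  note a = assms
  define gk where "gk k C p = max 0 (1 - real k * infdist p C)" for k and C :: "((nat \<Rightarrow> 'l) \<times> 'x) set" and p
  have lip: "\<bar>gk k C p - gk k C q\<bar> \<le> real k * dist p q" for k C p q unfolding gk_def by (rule lip_gk)
  have bd: "\<bar>gk k C p\<bar> \<le> 1" for k C p unfolding gk_def using infdist_nonneg[of p C] by auto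
  have cont: "continuous_on UNIV (gk k C)" for k C
    unfolding gk_def by (intro continuous_intros)
  have inteq: "integral\<^sup>L \<mu>1 (gk k C) = integral\<^sup>L \<mu>2 (gk k C)" for k C
  proof -
    have 1: "(\<lambda>N. (\<Sum>n=1..N. \<integral>\<sigma>. gk k C ((skew \<omega> ^^ n) (\<sigma>, undefined)) \<partial>\<nu>) / real N) \<longlonglongrightarrow> integral\<^sup>L \<mu>1 (gk k C)"
      by (rule core[OF a(1,3,4,5,8,10,11,12,13) _ lip bd]) simp
    have 2: "(\<lambda>N. (\<Sum>n=1..N. \<integral>\<sigma>. gk k C ((skew \<omega> ^^ n) (\<sigma>, undefined)) \<partial>\<nu>) / real N) \<longlonglongrightarrow> integral\<^sup>L \<mu>2 (gk k C)"
      by (rule core[OF a(1,3,6,7,9,10,11,12,14) _ lip bd]) simp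
    show ?thesis using LIMSEQ_unique[OF 1 2] .
  qed
  have meq: "measure \<mu>1 C = measure \<mu>2 C" if "closed C" for C
  proof (cases "C = {}")
    case True then show ?thesis by simp
  next
    case False
    have lim: "(\<lambda>k. integral\<^sup>L \<mu> (gk k C)) \<longlonglongrightarrow> measure \<mu> C"
      if s: "sets \<mu> = sets borel" and P: "prob_space \<mu>" for \<mu>
    proof -
      interpret prob_space \<mu> by (rule P)
      have Cm: "C \<in> sets \<mu>" using s \<open>closed C\<close> by simp
      have "(\<lambda>k. integral\<^sup>L \<mu> (gk k C)) \<longlonglongrightarrow> integral\<^sup>L \<mu> (indicator C :: _ \<Rightarrow> real)"
      proof (rule integral_dominated_convergence[where w = "\<lambda>_. 1"])
        show "(indicator C :: _ \<Rightarrow> real) \<in> borel_measurable \<mu>" using Cm by simp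
        show "gk k C \<in> borel_measurable \<mu>" for k by (rule meas_cont[OF s cont])
        show "integrable \<mu> (\<lambda>_. 1::real)" by simp
        show "AE p in \<mu>. (\<lambda>k. gk k C p) \<longlonglongrightarrow> indicator C p"
          unfolding gk_def by (intro AE_I2 gk_lim \<open>closed C\<close> False)
        show "AE p in \<mu>. norm (gk k C p) \<le> 1" for k using bd by simp
      qed
      also have "integral\<^sup>L \<mu> (indicator C :: _ \<Rightarrow> real) = measure \<mu> C" using Cm by simp
      finally show ?thesis .
    qed
    show ?thesis using LIMSEQ_unique[OF lim[OF a(4,5)], unfolded inteq, OF lim[OF a(6,7)]] .
  qed
  have sE: "sets borel = sigma_sets UNIV (Collect closed)"
    by (subst borel_eq_closed) (simp add: sets_measure_of)
  show ?thesis
  proof (rule measure_eqI_generator_eq[where E = "Collect closed" and \<Omega> = UNIV and A = "\<lambda>_. UNIV"])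
    show "Int_stable (Collect closed)" by (auto simp: Int_stable_def)
    show "Collect closed \<subseteq> Pow UNIV" by simp
    show "sets \<mu>1 = sigma_sets UNIV (Collect closed)" using a(4) sE by simp
    show "sets \<mu>2 = sigma_sets UNIV (Collect closed)" using a(6) sE by simp
    show "range (\<lambda>_. UNIV) \<subseteq> Collect closed" by auto
    show "(\<Union>i. UNIV) = UNIV" by simp
    show "emeasure \<mu>1 UNIV \<noteq> \<infinity>" for i :: nat
      using prob_space.emeasure_space_1[OF a(5)] sets_eq_imp_space_eq[OF a(4)] by simp
    fix X :: "((nat \<Rightarrow> 'l) \<times> 'x) set" assume "X \<in> Collect closed"
    then show "emeasure \<mu>1 X = emeasure \<mu>2 X"
      using meq finite_measure.emeasure_eq_measure[OF prob_space.axioms(1)[OF a(5)]]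
        finite_measure.emeasure_eq_measure[OF prob_space.axioms(1)[OF a(7)]] by simp
  qed
qed

end
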